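(* Let ten lines in the Euclidean plane be given by polar coordinates $(r_i,\theta_i)$, $i=1,\dots,10$, and write $s_{ij}=\sin(\theta_j-\theta_i)$. Suppose that the triangles $(2,4,6)$, $(1,5,9)$, $(1,5,10)$, $(1,5,7)$ are positively oriented and the triangles $(1,3,7)$, $(1,4,7)$, $(3,5,8)$, $(2,8,9)$, $(6,7,10)$ are negatively oriented, where for each of these nine triangles $(i,j,k)$ we have $0<\theta_i<\theta_j<\theta_k<180$. Then $$s_{89}\,s_{1,10}\,s_{24}\,s_{35}\,s_{67}+s_{46}\,s_{19}\,s_{7,10}\,s_{35}\,s_{28}-s_{46}\,s_{38}\,s_{7,10}\,s_{29}\,s_{15}>0 .$$
   Context: Angles are in degrees. A line with polar coordinates $(r,\theta)$ is the line $\{(p,q)\in\mathbb{R}^2: p\cos\theta+q\sin\theta=r\}$, i.e. $r$ is the perpendicular distance from the origin and $\theta$ is the angle the perpendicular makes with the polar direction. No ordering $\theta_i<\theta_j$ for $i<j$ is assumed except those specified. For three lines $i,j,k$ with $\theta_i<\theta_j<\theta_k$, the triangle $(i,j,k)$ is called positively oriented if $r_i\sin(\theta_k-\theta_j)-r_j\sin(\theta_k-\theta_i)+r_k\sin(\theta_j-\theta_i)>0$ (geometrically: the origin lies in an unbounded face of the arrangement of the three lines bounded by three edges) and negatively oriented if $-r_i\sin(\theta_k-\theta_j)+r_j\sin(\theta_k-\theta_i)-r_k\sin(\theta_j-\theta_i)>0$ (the origin lies in an unbounded face with two edges). *)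

theory Defs
  imports Complex_Main
begin

definition sind :: "real \<Rightarrow> real" where
  "sind x = sin (x * pi / 180)"

text \<open>Lines are given by polar coordinates (r i, th i); angles in degrees.
  Orientation of the triangle (i,j,k), meant for th i < th j < th k.\<close>
definition pos_oriented :: "(nat \<Rightarrow> real) \<Rightarrow> (nat \<Rightarrow> real) \<Rightarrow> nat \<Rightarrow> nat \<Rightarrow> nat \<Rightarrow> bool" where
  "pos_oriented r th i j k \<longleftrightarrow>
     r i * sind (th k - th j) - r j * sind (th k - th i) + r k * sind (th j - th i) > 0"

definition neg_oriented :: "(nat \<Rightarrow> real) \<Rightarrow> (nat \<Rightarrow> real) \<Rightarrow> nat \<Rightarrow> nat \<Rightarrow> nat \<Rightarrow> bool" where
  "neg_oriented r th i j k \<longleftrightarrow>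
     - r i * sind (th k - th j) + r j * sind (th k - th i) - r k * sind (th j - th i) > 0"

definition angles_ordered :: "(nat \<Rightarrow> real) \<Rightarrow> nat \<Rightarrow> nat \<Rightarrow> nat \<Rightarrow> bool" where
  "angles_ordered th i j k \<longleftrightarrow> 0 < th i \<and> th i < th j \<and> th j < th k \<and> th k < 180"

end

theory Submission
  imports Defs
begin

lemma ident:
  fixes c s r :: "nat \<Rightarrow> real"
  defines "S \<equiv> \<lambda>i j. c i * s j - s i * c j"
  defines "B \<equiv> \<lambda>i j k. r i * S j k - r j * S i k + r k * S i j"
  defines "P \<equiv> S 8 9 * S 1 10 * S 2 4 * S 3 5 * S 6 7
         + S 4 6 * S 1 9 * S 7 10 * S 3 5 * S 2 8
         - S 4 6 * S 3 8 * S 7 10 * S 2 9 * S 1 5"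
  shows "(S 1 7 * S 8 9 * S 3 5 * S 1 5 * S 7 10) * B 2 4 6
   + (S 4 6 * S 2 8 * S 1 7 * S 3 5 * S 7 10) * B 1 5 9
   + (S 2 4 * S 6 7 * S 1 7 * S 8 9 * S 3 5) * B 1 5 10
   - P * B 1 5 7
   - (S 4 6 * S 2 9 * S 5 8 * S 1 5 * S 7 10) * B 1 3 7
   - (S 2 6 * S 8 9 * S 3 5 * S 1 5 * S 7 10) * B 1 4 7
   - (S 4 6 * S 2 9 * S 1 7 * S 1 5 * S 7 10) * B 3 5 8
   - (S 4 6 * S 1 7 * S 3 5 * S 1 5 * S 7 10) * B 2 8 9
   - (S 2 4 * S 1 7 * S 8 9 * S 3 5 * S 1 5) * B 6 7 10 = 0"
  unfolding S_def B_def P_def by algebra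

theorem theoremt:
  fixes r th :: "nat \<Rightarrow> real"
  assumes "angles_ordered th 2 4 6" "angles_ordered th 1 5 9"
    "angles_ordered th 1 5 10" "angles_ordered th 1 5 7"
    "angles_ordered th 1 3 7" "angles_ordered th 1 4 7"
    "angles_ordered th 3 5 8" "angles_ordered th 2 8 9"
    "angles_ordered th 6 7 10"
  and "pos_oriented r th 2 4 6" "pos_oriented r th 1 5 9"
    "pos_oriented r th 1 5 10" "pos_oriented r th 1 5 7"
  and "neg_oriented r th 1 3 7" "neg_oriented r th 1 4 7"
    "neg_oriented r th 3 5 8" "neg_oriented r th 2 8 9"
    "neg_oriented r th 6 7 10"
  shows "(let s = (\<lambda>i j. sind (th j - th i)) in
           s 8 9 * s 1 10 * s 2 4 * s 3 5 * s 6 7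
         + s 4 6 * s 1 9 * s 7 10 * s 3 5 * s 2 8
         - s 4 6 * s 3 8 * s 7 10 * s 2 9 * s 1 5) > 0"
  proof -
  define x where "x = (\<lambda>i. th i * pi / 180)"
  define c where "c = (\<lambda>i. cos (x i))"
  define sn where "sn = (\<lambda>i. sin (x i))"
  define S where "S = (\<lambda>i j. c i * sn j - sn i * c j)"
  have sd: "sind (th j - th i) = S i j" for i j
  proof -
    have e: "(th j - th i) * pi / 180 = x j - x i"
      unfolding x_def by (simp add: field_simps)
    show ?thesis unfolding sind_def e S_def c_def sn_def sin_diff by (simp add: mult.commute)
  qed
  have pos: "0 < S i j" if "th i < th j" "0 < th i" "th j < 180" for i j
  proof -
    have "0 < sind (th j - th i)" unfolding sind_def
    proof (rule sin_gt_zero)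
      show "0 < (th j - th i) * pi / 180" using that by simp
      have "th j - th i < 180" using that by simp
      hence "(th j - th i) * pi < 180 * pi" by simp
      thus "(th j - th i) * pi / 180 < pi" by simp
    qed
    thus ?thesis by (simp add: sd)
  qed
  note ao = assms(1-9)[unfolded angles_ordered_def]
  have p17: "0 < S 1 7" "0 < S 8 9" "0 < S 3 5" "0 < S 1 5" "0 < S 7 10"
    "0 < S 4 6" "0 < S 2 6" "0 < S 2 4" "0 < S 2 9" "0 < S 5 8" "0 < S 2 8" "0 < S 6 7"
    using ao by (auto intro!: pos)
  define B where "B = (\<lambda>i j k. r i * S j k - r j * S i k + r k * S i j)"
  define P where "P = S 8 9 * S 1 10 * S 2 4 * S 3 5 * S 6 7
         + S 4 6 * S 1 9 * S 7 10 * S 3 5 * S 2 8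
         - S 4 6 * S 3 8 * S 7 10 * S 2 9 * S 1 5"
  have po: "0 < B 2 4 6" "0 < B 1 5 9" "0 < B 1 5 10" "0 < B 1 5 7"
    using assms(10-13) unfolding pos_oriented_def B_def sd by auto
  have ne: "B 1 3 7 < 0" "B 1 4 7 < 0" "B 3 5 8 < 0" "B 2 8 9 < 0" "B 6 7 10 < 0"
    using assms(14-18) unfolding neg_oriented_def B_def sd by auto
  have id: "(S 1 7 * S 8 9 * S 3 5 * S 1 5 * S 7 10) * B 2 4 6
   + (S 4 6 * S 2 8 * S 1 7 * S 3 5 * S 7 10) * B 1 5 9
   + (S 2 4 * S 6 7 * S 1 7 * S 8 9 * S 3 5) * B 1 5 10
   - P * B 1 5 7
   - (S 4 6 * S 2 9 * S 5 8 * S 1 5 * S 7 10) * B 1 3 7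
   - (S 2 6 * S 8 9 * S 3 5 * S 1 5 * S 7 10) * B 1 4 7
   - (S 4 6 * S 2 9 * S 1 7 * S 1 5 * S 7 10) * B 3 5 8
   - (S 4 6 * S 1 7 * S 3 5 * S 1 5 * S 7 10) * B 2 8 9
   - (S 2 4 * S 1 7 * S 8 9 * S 3 5 * S 1 5) * B 6 7 10 = 0"
    unfolding S_def B_def P_def using ident[of c sn r] by simp
  have "0 < P"
  proof (rule ccontr)
    assume "\<not> 0 < P"
    have t1: "0 < (S 1 7 * S 8 9 * S 3 5 * S 1 5 * S 7 10) * B 2 4 6"
      using p17 po by (simp add: mult_pos_pos)
    have t2: "0 \<le> (S 4 6 * S 2 8 * S 1 7 * S 3 5 * S 7 10) * B 1 5 9"
      using p17 po by (simp add: mult_pos_pos less_imp_le)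
    have t3: "0 \<le> (S 2 4 * S 6 7 * S 1 7 * S 8 9 * S 3 5) * B 1 5 10"
      using p17 po by (simp add: mult_pos_pos less_imp_le)
    have t4: "P * B 1 5 7 \<le> 0"
      using \<open>\<not> 0 < P\<close> po(4) by (simp add: mult_nonpos_nonneg)
    have t5: "(S 4 6 * S 2 9 * S 5 8 * S 1 5 * S 7 10) * B 1 3 7 \<le> 0"
      using p17 ne by (simp add: mult_pos_neg less_imp_le)
    have t6: "(S 2 6 * S 8 9 * S 3 5 * S 1 5 * S 7 10) * B 1 4 7 \<le> 0"
      using p17 ne by (simp add: mult_pos_neg less_imp_le)
    have t7: "(S 4 6 * S 2 9 * S 1 7 * S 1 5 * S 7 10) * B 3 5 8 \<le> 0"
      using p17 ne by (simp add: mult_pos_neg less_imp_le)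
    have t8: "(S 4 6 * S 1 7 * S 3 5 * S 1 5 * S 7 10) * B 2 8 9 \<le> 0"
      using p17 ne by (simp add: mult_pos_neg less_imp_le)
    have t9: "(S 2 4 * S 1 7 * S 8 9 * S 3 5 * S 1 5) * B 6 7 10 \<le> 0"
      using p17 ne by (simp add: mult_pos_neg less_imp_le)
    show False using id t1 t2 t3 t4 t5 t6 t7 t8 t9 by linarith
  qed
  thus ?thesis unfolding Let_def sd P_def .
qed

end
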